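(* Let $X$ be a space satisfying ${\sf S}_1(\mathcal{G}_K,\mathcal{G})$. Then for each sequence $(\mathcal{U}_n:n\in\mathbb{N})$ of elements of $\mathcal{G}_K$ there is a sequence $(U_n:n\in\mathbb{N})$ with $U_n\in\mathcal{U}_n$ for each $n$, such that for each $x\in X$, for all but finitely many $n$, \[ x\in \bigcup_{T_n<j\le T_{n+1}} U_j, \] where $T_n=1+2+\cdots+n$ is the $n$-th triangular number.
   Context: All spaces are infinite ${\sf T}_1$ topological spaces. $\mathcal{G}_K$ is the family of all collections $\mathcal{U}$ of ${\sf G}_\delta$ subsets of $X$ with $X\notin\mathcal{U}$ such that each compact subset of $X$ is contained in some member of $\mathcal{U}$. $\mathcal{G}$ is the family of all covers of $X$ by ${\sf G}_\delta$ sets. ${\sf S}_1(\mathcal{A},\mathcal{B})$: for each sequence $(A_n)$ of elements of $\mathcal{A}$ there are $B_n\in A_n$ with $\{B_n:n\in\mathbb{N}\}\in\mathcal{B}$. *)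

theory Defs
  imports "HOL-Analysis.Analysis"
begin

definition GK :: "'a topology \<Rightarrow> 'a set set set" where
  "GK X = {\<U>. (\<forall>U\<in>\<U>. gdelta_in X U) \<and> topspace X \<notin> \<U> \<and>
              (\<forall>K. compactin X K \<longrightarrow> (\<exists>U\<in>\<U>. K \<subseteq> U))}"

definition Gcov :: "'a topology \<Rightarrow> 'a set set set" where
  "Gcov X = {\<U>. (\<forall>U\<in>\<U>. gdelta_in X U) \<and> \<Union>\<U> = topspace X}"

definition S1 :: "'b set set \<Rightarrow> 'b set set \<Rightarrow> bool" where
  "S1 A B \<longleftrightarrow> (\<forall>\<A>::nat \<Rightarrow> 'b set. (\<forall>n. \<A> n \<in> A) \<longrightarrow>
                 (\<exists>f. (\<forall>n. f n \<in> \<A> n) \<and> range f \<in> B))"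

definition tri :: "nat \<Rightarrow> nat" where
  "tri n = n * (n + 1) div 2"

end

theory Submission
  imports Defs
begin

lemma tri_Suc: "tri (Suc n) = tri n + Suc n"
  unfolding tri_def by (induction n) auto

lemma tri_mono_le: "n \<le> n' \<Longrightarrow> tri n \<le> tri n'"
proof (induction n' rule: dec_induct)
  case (step k) then show ?case by (simp add: tri_Suc)
qed simp

lemma tri_ex: "\<exists>n. tri n \<le> j \<and> j < tri (Suc n)"
proof (induction j)
  case 0 then show ?case by (rule exI[of _ 0]) (simp add: tri_def)
next
  case (Suc j)
  then obtain n where n: "tri n \<le> j" "j < tri (Suc n)" by blast
  show ?case
  proof (cases "Suc j < tri (Suc n)")
    case True with n show ?thesis by (intro exI[of _ n]) simp
  next
    case False
    then have "Suc j = tri (Suc n)" using n by simp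
    then show ?thesis by (intro exI[of _ "Suc n"]) (simp add: tri_Suc[of "Suc n"])
  qed
qed

lemma tri_uniq:
  assumes "tri n \<le> j" "j < tri (Suc n)" "tri n' \<le> j" "j < tri (Suc n')"
  shows "n = n'"
proof (rule ccontr)
  assume "n \<noteq> n'"
  then consider "Suc n \<le> n'" | "Suc n' \<le> n" by linarith
  then show False
  proof cases
    case 1 then have "tri (Suc n) \<le> tri n'" by (rule tri_mono_le)
    with assms show False by simp
  next
    case 2 then have "tri (Suc n') \<le> tri n" by (rule tri_mono_le)
    with assms show False by simp
  qed
qed

definition blk :: "nat \<Rightarrow> nat" where
  "blk j = (THE n. tri n \<le> j \<and> j < tri (Suc n))"

lemma blk: "tri (blk j) \<le> j \<and> j < tri (Suc (blk j))"
proof -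
  obtain n where "tri n \<le> j \<and> j < tri (Suc n)" using tri_ex by blast
  then show ?thesis unfolding blk_def
    by (rule theI) (use tri_uniq \<open>tri n \<le> j \<and> j < tri (Suc n)\<close> in blast)
qed

lemma blk_eq: "m \<le> n \<Longrightarrow> blk (tri n + m) = n"
  using blk[of "tri n + m"] tri_uniq[of n "tri n + m" "blk (tri n + m)"]
  by (simp add: tri_Suc)

theorem lemma4p5:
  fixes X :: "'a topology"
  assumes "t1_space X"
    and "infinite (topspace X)"
    and "S1 (GK X) (Gcov X)"
    and "\<And>n. \<U> n \<in> GK X"
  shows "\<exists>U. (\<forall>n. U n \<in> \<U> n) \<and>
    (\<forall>x\<in>topspace X. \<forall>\<^sub>F n in sequentially. x \<in> (\<Union>j\<in>{tri n..<tri (Suc n)}. U j))"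
proof -
  define W where "W m = {(\<Inter>n\<in>{m..}. V n) | V. \<forall>n\<ge>m. V n \<in> \<U> (tri n + m)}" for m
  have UG: "\<And>j U. U \<in> \<U> j \<Longrightarrow> gdelta_in X U" using assms(4) unfolding GK_def by blast
  have UX: "\<And>j. topspace X \<notin> \<U> j" using assms(4) unfolding GK_def by blast
  have UK: "\<And>j K. compactin X K \<Longrightarrow> \<exists>U\<in>\<U> j. K \<subseteq> U" using assms(4) unfolding GK_def by blast
  have "W m \<in> GK X" for m
    unfolding GK_def
  proof (intro CollectI conjI ballI allI impI)
    fix S assume "S \<in> W m"
    then obtain V where V: "\<forall>n\<ge>m. V n \<in> \<U> (tri n + m)" and S: "S = (\<Inter>n\<in>{m..}. V n)"
      unfolding W_def by blast
    show "gdelta_in X S" unfolding S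
      by (rule gdelta_in_Inter) (use V UG in auto)
  next
    show "topspace X \<notin> W m"
    proof
      assume "topspace X \<in> W m"
      then obtain V where V: "\<forall>n\<ge>m. V n \<in> \<U> (tri n + m)" and S: "topspace X = (\<Inter>n\<in>{m..}. V n)"
        unfolding W_def by blast
      have Vm: "V m \<in> \<U> (tri m + m)" using V by simp
      moreover have "V m \<subseteq> topspace X" using UG[OF Vm] gdelta_in_subset by blast
      moreover have "topspace X \<subseteq> V m" using S by auto
      ultimately show False using UX by (metis subset_antisym)
    qed
  next
    fix K assume K: "compactin X K"
    have "\<forall>n. \<exists>U. (n \<ge> m \<longrightarrow> U \<in> \<U> (tri n + m)) \<and> K \<subseteq> U"
      using UK[OF K] by blast
    then obtain V where V: "\<And>n. (n \<ge> m \<longrightarrow> V n \<in> \<U> (tri n + m)) \<and> K \<subseteq> V n" by metis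
    show "\<exists>U\<in>W m. K \<subseteq> U"
      by (rule bexI[of _ "\<Inter>n\<in>{m..}. V n"]) (use V in \<open>auto simp: W_def\<close>)
  qed
  then obtain f where f: "\<And>m. f m \<in> W m" and cov: "range f \<in> Gcov X"
    using assms(3) unfolding S1_def by blast
  have "\<forall>m. \<exists>V. (\<forall>n\<ge>m. V n \<in> \<U> (tri n + m)) \<and> f m = (\<Inter>n\<in>{m..}. V n)"
    using f unfolding W_def by blast
  then obtain Vs where Vs: "\<And>m n. n \<ge> m \<Longrightarrow> Vs m n \<in> \<U> (tri n + m)"
    and fV: "\<And>m. f m = (\<Inter>n\<in>{m..}. Vs m n)" by metis
  define U where "U j = Vs (j - tri (blk j)) (blk j)" for j
  have UU: "U j \<in> \<U> j" for j
  proof -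
    have b: "tri (blk j) \<le> j" "j < tri (blk j) + Suc (blk j)" using blk[of j] by (auto simp: tri_Suc)
    then have "j - tri (blk j) \<le> blk j" by linarith
    from Vs[OF this] b show ?thesis unfolding U_def by simp
  qed
  have U2: "m \<le> n \<Longrightarrow> U (tri n + m) = Vs m n" for m n
    unfolding U_def using blk_eq[of m n] by simp
  show ?thesis
  proof (intro exI[of _ U] conjI allI ballI)
    show "U n \<in> \<U> n" for n by (rule UU)
  next
    fix x assume x: "x \<in> topspace X"
    then obtain m where "x \<in> f m" using cov unfolding Gcov_def by auto
    then have xm: "\<And>n. n \<ge> m \<Longrightarrow> x \<in> Vs m n" using fV by auto
    show "\<forall>\<^sub>F n in sequentially. x \<in> (\<Union>j\<in>{tri n..<tri (Suc n)}. U j)"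
      unfolding eventually_sequentially
    proof (intro exI[of _ m] allI impI)
      fix n assume "m \<le> n"
      then have "tri n + m \<in> {tri n..<tri (Suc n)}" "x \<in> U (tri n + m)"
        using xm U2 by (auto simp: tri_Suc)
      then show "x \<in> (\<Union>j\<in>{tri n..<tri (Suc n)}. U j)" by blast
    qed
  qed
qed

end
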